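(* The Heisenberg Lie algebra $H(m)$ is $2$-capable if and only if $m=1$.
   Context: All Lie algebras are over a fixed field. The Heisenberg Lie algebra $H(m)$ is the Lie algebra of dimension $2m+1$ with $H(m)^2=Z(H(m))$ and $\dim H(m)^2=1$. A Lie algebra $L$ is $2$-capable if $L\cong H/Z_2(H)$ for some Lie algebra $H$, where $Z_2(H)$ is the second term of the upper central series of $H$. *)

theory Defs
  imports Complex_Main "HOL-Library.Function_Algebras"
begin

definition lie_algebra ::
  "('k::field \<Rightarrow> 'v::ab_group_add \<Rightarrow> 'v) \<Rightarrow> 'v set \<Rightarrow> ('v \<Rightarrow> 'v \<Rightarrow> 'v) \<Rightarrow> bool" where
  "lie_algebra scale V br \<longleftrightarrow>
     vector_space scale \<and> module.subspace scale V \<and>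
     (\<forall>x\<in>V. \<forall>y\<in>V. br x y \<in> V) \<and>
     (\<forall>x\<in>V. \<forall>y\<in>V. \<forall>z\<in>V. br (x + y) z = br x z + br y z) \<and>
     (\<forall>x\<in>V. \<forall>y\<in>V. \<forall>z\<in>V. br x (y + z) = br x y + br x z) \<and>
     (\<forall>c. \<forall>x\<in>V. \<forall>y\<in>V. br (scale c x) y = scale c (br x y)) \<and>
     (\<forall>c. \<forall>x\<in>V. \<forall>y\<in>V. br x (scale c y) = scale c (br x y)) \<and>
     (\<forall>x\<in>V. br x x = 0) \<and>
     (\<forall>x\<in>V. \<forall>y\<in>V. \<forall>z\<in>V. br x (br y z) + br y (br z x) + br z (br x y) = 0)"

definition lie_center :: "'v set \<Rightarrow> ('v \<Rightarrow> 'v \<Rightarrow> 'v::zero) \<Rightarrow> 'v set" where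
  "lie_center V br = {z \<in> V. \<forall>x\<in>V. br z x = 0}"

definition lie_center2 :: "'v set \<Rightarrow> ('v \<Rightarrow> 'v \<Rightarrow> 'v::zero) \<Rightarrow> 'v set" where
  "lie_center2 V br = {z \<in> V. \<forall>x\<in>V. br z x \<in> lie_center V br}"

definition lie_derived ::
  "('k::field \<Rightarrow> 'v::ab_group_add \<Rightarrow> 'v) \<Rightarrow> 'v set \<Rightarrow> ('v \<Rightarrow> 'v \<Rightarrow> 'v) \<Rightarrow> 'v set" where
  "lie_derived scale V br = module.span scale {br x y | x y. x \<in> V \<and> y \<in> V}"

definition is_heisenberg ::
  "('k::field \<Rightarrow> 'v::ab_group_add \<Rightarrow> 'v) \<Rightarrow> 'v set \<Rightarrow> ('v \<Rightarrow> 'v \<Rightarrow> 'v) \<Rightarrow> nat \<Rightarrow> bool" where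
  "is_heisenberg scale V br m \<longleftrightarrow>
     lie_algebra scale V br \<and>
     vector_space.dim scale V = 2 * m + 1 \<and>
     lie_derived scale V br = lie_center V br \<and>
     vector_space.dim scale (lie_derived scale V br) = 1"

definition lie_hom ::
  "('k::field \<Rightarrow> 'v::ab_group_add \<Rightarrow> 'v) \<Rightarrow> 'v set \<Rightarrow> ('v \<Rightarrow> 'v \<Rightarrow> 'v) \<Rightarrow>
   ('k \<Rightarrow> 'w::ab_group_add \<Rightarrow> 'w) \<Rightarrow> 'w set \<Rightarrow> ('w \<Rightarrow> 'w \<Rightarrow> 'w) \<Rightarrow> ('v \<Rightarrow> 'w) \<Rightarrow> bool" where
  "lie_hom s1 V1 br1 s2 V2 br2 f \<longleftrightarrow>
     (\<forall>x\<in>V1. f x \<in> V2) \<and>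
     (\<forall>x\<in>V1. \<forall>y\<in>V1. f (x + y) = f x + f y) \<and>
     (\<forall>c. \<forall>x\<in>V1. f (s1 c x) = s2 c (f x)) \<and>
     (\<forall>x\<in>V1. \<forall>y\<in>V1. f (br1 x y) = br2 (f x) (f y))"

definition fscale :: "'k::field \<Rightarrow> ('i \<Rightarrow> 'k) \<Rightarrow> ('i \<Rightarrow> 'k)" where
  "fscale c g = (\<lambda>i. c * g i)"

text \<open>L is 2-capable iff L is isomorphic to H/Z_2(H) for some Lie algebra H
  over the same field.  By the first isomorphism theorem this means: there is a surjective
  Lie homomorphism f : H -> L with kernel exactly Z_2(H).  Every vector space over 'k embeds
  as a subspace of a function space ('i => 'k) for a large enough index type; the candidate
  algebras H are taken to be subspaces of ('h + nat => 'k) with the pointwise operations,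
  where 'h is an arbitrary type (given by the TYPE argument).  Since 'h is free in the main
  theorem, H ranges over Lie algebras of every dimension.\<close>

definition two_capable ::
  "'h itself \<Rightarrow> ('k::field \<Rightarrow> 'v::ab_group_add \<Rightarrow> 'v) \<Rightarrow> 'v set \<Rightarrow> ('v \<Rightarrow> 'v \<Rightarrow> 'v) \<Rightarrow> bool" where
  "two_capable (_::'h itself) scale V br \<longleftrightarrow>
     (\<exists>(H :: ('h + nat \<Rightarrow> 'k) set) brH f.
        lie_algebra fscale H brH \<and>
        lie_hom fscale H brH scale V br f \<and>
        f ` H = V \<and>
        {x \<in> H. f x = 0} = lie_center2 H brH)"

end

theory Submission
  imports Defs
begin

context vector_space begin

lemma indep_card_le_dim:
  assumes "B \<subseteq> V" "independent B" "dim V > 0"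
  shows "finite B \<and> card B \<le> dim V"
proof -
  obtain A where A: "A \<subseteq> V" "independent A" "V \<subseteq> span A" "card A = dim V"
    using basis_exists by blast
  have "finite A" using A(4) assms(3) card_gt_0_iff by force
  moreover have "B \<subseteq> span A" using assms(1) A(3) by blast
  ultimately show ?thesis using independent_span_bound[of A B] assms(2) A(4) by auto
qed

lemma indep_spans:
  assumes "B \<subseteq> V" "independent B" "finite B" "card B = dim V" "dim V > 0"
  shows "V \<subseteq> span B"
proof
  fix w assume w: "w \<in> V"
  show "w \<in> span B"
  proof (rule ccontr)
    assume nw: "w \<notin> span B"
    then have "w \<notin> B" using span_base by blast
    have "independent (insert w B)" using independent_insertI[OF nw assms(2)] .
    then have "card (insert w B) \<le> dim V" using indep_card_le_dim[of "insert w B" V] assms w by auto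
    then show False using assms(3,4) \<open>w \<notin> B\<close> by simp
  qed
qed

lemma dim_one_span:
  assumes "z \<in> S" "z \<noteq> 0" "dim S = 1"
  shows "S \<subseteq> span {z}"
proof -
  have i: "independent {z}" using assms(2) independent_insert by (simp add: span_empty)
  show ?thesis using indep_spans[of "{z}" S] i assms by simp
qed

end


locale liealg =
  fixes scale :: "'k::field \<Rightarrow> 'v::ab_group_add \<Rightarrow> 'v" and V :: "'v set" and br :: "'v \<Rightarrow> 'v \<Rightarrow> 'v"
  assumes lie: "lie_algebra scale V br"
begin

sublocale vector_space scale using lie unfolding lie_algebra_def by auto

lemma sub: "subspace V" using lie unfolding lie_algebra_def by auto
lemma cl: "x \<in> V \<Longrightarrow> y \<in> V \<Longrightarrow> br x y \<in> V" using lie unfolding lie_algebra_def by auto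
lemma addL: "x \<in> V \<Longrightarrow> y \<in> V \<Longrightarrow> z \<in> V \<Longrightarrow> br (x + y) z = br x z + br y z" using lie unfolding lie_algebra_def by auto
lemma addR: "x \<in> V \<Longrightarrow> y \<in> V \<Longrightarrow> z \<in> V \<Longrightarrow> br x (y + z) = br x y + br x z" using lie unfolding lie_algebra_def by auto
lemma scL: "x \<in> V \<Longrightarrow> y \<in> V \<Longrightarrow> br (scale c x) y = scale c (br x y)" using lie unfolding lie_algebra_def by auto
lemma scR: "x \<in> V \<Longrightarrow> y \<in> V \<Longrightarrow> br x (scale c y) = scale c (br x y)" using lie unfolding lie_algebra_def by auto
lemma alt: "x \<in> V \<Longrightarrow> br x x = 0" using lie unfolding lie_algebra_def by auto
lemma jac: "x \<in> V \<Longrightarrow> y \<in> V \<Longrightarrow> z \<in> V \<Longrightarrow> br x (br y z) + br y (br z x) + br z (br x y) = 0"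
  using lie unfolding lie_algebra_def by auto

lemma V0: "0 \<in> V" using sub subspace_0 by auto
lemma Vadd: "x \<in> V \<Longrightarrow> y \<in> V \<Longrightarrow> x + y \<in> V" using sub subspace_add by auto
lemma Vsc: "x \<in> V \<Longrightarrow> scale c x \<in> V" using sub subspace_scale by auto
lemma Vneg: "x \<in> V \<Longrightarrow> - x \<in> V" using sub subspace_neg by auto
lemma Vdiff: "x \<in> V \<Longrightarrow> y \<in> V \<Longrightarrow> x - y \<in> V" using sub subspace_diff by auto

lemma negL: "x \<in> V \<Longrightarrow> y \<in> V \<Longrightarrow> br (- x) y = - br x y"
  using scL[of x y "-1"] by simp
lemma negR: "x \<in> V \<Longrightarrow> y \<in> V \<Longrightarrow> br x (- y) = - br x y"
  using scR[of x y "-1"] by simp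
lemma diffL: "x \<in> V \<Longrightarrow> y \<in> V \<Longrightarrow> z \<in> V \<Longrightarrow> br (x - y) z = br x z - br y z"
  using addL[of x "-y" z] negL[of y z] Vneg by simp
lemma diffR: "x \<in> V \<Longrightarrow> y \<in> V \<Longrightarrow> z \<in> V \<Longrightarrow> br x (y - z) = br x y - br x z"
  using addR[of x y "-z"] negR[of x z] Vneg by simp
lemma zeroL: "y \<in> V \<Longrightarrow> br 0 y = 0" using scL[of 0 y 0] V0 by simp
lemma zeroR: "y \<in> V \<Longrightarrow> br y 0 = 0" using scR[of y 0 0] V0 by simp

lemma anti: "x \<in> V \<Longrightarrow> y \<in> V \<Longrightarrow> br x y = - br y x"
proof -
  assume x: "x \<in> V" and y: "y \<in> V"
  have "0 = br (x + y) (x + y)" using alt Vadd x y by simp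
  also have "\<dots> = br x x + br x y + (br y x + br y y)"
    using addL addR x y Vadd by (simp add: add.assoc)
  finally show ?thesis using alt x y by (simp add: eq_neg_iff_add_eq_0)
qed

lemma jac2: "p \<in> V \<Longrightarrow> q \<in> V \<Longrightarrow> w \<in> V \<Longrightarrow> br (br p q) w + br (br q w) p + br (br w p) q = 0"
proof -
  assume p: "p \<in> V" and q: "q \<in> V" and w: "w \<in> V"
  have J: "br w (br p q) + br p (br q w) + br q (br w p) = 0" using jac p q w by simp
  have h1: "br (br p q) w = - br w (br p q)" and h2: "br (br q w) p = - br p (br q w)"
    and h3: "br (br w p) q = - br q (br w p)"
    using anti[OF cl[OF p q] w] anti[OF cl[OF q w] p] anti[OF cl[OF w p] q] by auto
  have "br (br p q) w + br (br q w) p + br (br w p) q = - (br w (br p q) + br p (br q w) + br q (br w p))"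
    by (simp only: h1 h2 h3) (simp add: algebra_simps)
  then show ?thesis using J by simp
qed

end


context liealg begin

lemma abelian_W_span:
  assumes u: "u \<in> V" and v: "v \<in> V" and zdef: "z = br u v"
    and cen: "\<And>p. p \<in> V \<Longrightarrow> (\<forall>x\<in>V. br p x = 0) \<Longrightarrow> p \<in> span {z}"
    and mult: "\<And>p q. p \<in> V \<Longrightarrow> q \<in> V \<Longrightarrow> \<exists>t. br p q = scale t z"
    and zc: "\<And>x. x \<in> V \<Longrightarrow> br z x = 0"
    and W: "\<And>a b. a \<in> V \<Longrightarrow> b \<in> V \<Longrightarrow> br a u = 0 \<Longrightarrow> br a v = 0 \<Longrightarrow> br b u = 0 \<Longrightarrow> br b v = 0 \<Longrightarrow> br a b = 0"
  shows "V \<subseteq> span {u, v, z}"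
proof -
  have z: "z \<in> V" using zdef cl u v by simp
  have proj: "\<exists>r t. w - scale t u + scale r v \<in> V \<and> br (w - scale t u + scale r v) u = 0
      \<and> br (w - scale t u + scale r v) v = 0" if w: "w \<in> V" for w
  proof -
    obtain r where r: "br w u = scale r z" using mult w u by blast
    obtain t where t: "br w v = scale t z" using mult w v by blast
    have tu: "scale t u \<in> V" and rv: "scale r v \<in> V" using Vsc u v by auto
    have pV: "w - scale t u + scale r v \<in> V" using Vadd Vdiff tu rv w by simp
    have "br (w - scale t u + scale r v) u = br w u - scale t (br u u) + scale r (br v u)"
      using addL diffL scL Vdiff tu rv w u v by simp
    also have "\<dots> = 0" using r alt u anti[OF v u] zdef by simp
    finally have e1: "br (w - scale t u + scale r v) u = 0" .
    have "br (w - scale t u + scale r v) v = br w v - scale t (br u v) + scale r (br v v)"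
      using addL diffL scL Vdiff tu rv w u v by simp
    also have "\<dots> = 0" using t alt v zdef by simp
    finally have e2: "br (w - scale t u + scale r v) v = 0" .
    show ?thesis using pV e1 e2 by blast
  qed
  show ?thesis
  proof
    fix w assume w: "w \<in> V"
    obtain r t where p: "w - scale t u + scale r v \<in> V" "br (w - scale t u + scale r v) u = 0"
      "br (w - scale t u + scale r v) v = 0" using proj[OF w] by blast
    define pw where "pw = w - scale t u + scale r v"
    have pwV: "pw \<in> V" and pu: "br pw u = 0" and pv: "br pw v = 0" using p pw_def by auto
    have "\<forall>x\<in>V. br pw x = 0"
    proof
      fix x assume x: "x \<in> V"
      obtain r' t' where p': "x - scale t' u + scale r' v \<in> V" "br (x - scale t' u + scale r' v) u = 0"
        "br (x - scale t' u + scale r' v) v = 0" using proj[OF x] by blast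
      define px where "px = x - scale t' u + scale r' v"
      have pxV: "px \<in> V" and pxu: "br px u = 0" and pxv: "br px v = 0" using p' px_def by auto
      have xe: "x = (px + scale t' u) - scale r' v" using px_def by (simp add: algebra_simps)
      have tu: "scale t' u \<in> V" and rv: "scale r' v \<in> V" using Vsc u v by auto
      have "br pw x = br pw px + scale t' (br pw u) - scale r' (br pw v)"
        unfolding xe using addR diffR scR pwV pxV tu rv u v Vadd by simp
      also have "\<dots> = 0" using W[OF pwV pxV pu pv pxu pxv] pu pv by simp
      finally show "br pw x = 0" .
    qed
    then have "pw \<in> span {u, v, z}" using cen[OF pwV] span_mono[of "{z}" "{u,v,z}"] by blast
    moreover have "w = pw + scale t u - scale r v" using pw_def by (simp add: algebra_simps)
    moreover have "u \<in> span {u, v, z}" "v \<in> span {u, v, z}" by (auto intro: span_base)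
    ultimately show "w \<in> span {u, v, z}"
      by (metis span_add span_diff span_scale)
  qed
qed

end


locale liepair = L1: liealg s1 H brH + L2: liealg s2 V br
  for s1 :: "'k::field \<Rightarrow> 'w::ab_group_add \<Rightarrow> 'w" and H brH
  and s2 :: "'k \<Rightarrow> 'v::ab_group_add \<Rightarrow> 'v" and V br +
  fixes f :: "'w \<Rightarrow> 'v"
  assumes hom: "lie_hom s1 H brH s2 V br f" and surj: "f ` H = V"
    and ker: "{x \<in> H. f x = 0} = lie_center2 H brH"
begin

lemma fin: "x \<in> H \<Longrightarrow> f x \<in> V" using hom unfolding lie_hom_def by auto
lemma fadd: "x \<in> H \<Longrightarrow> y \<in> H \<Longrightarrow> f (x + y) = f x + f y" using hom unfolding lie_hom_def by auto
lemma fsc: "x \<in> H \<Longrightarrow> f (s1 c x) = s2 c (f x)" using hom unfolding lie_hom_def by auto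
lemma fbr: "x \<in> H \<Longrightarrow> y \<in> H \<Longrightarrow> f (brH x y) = br (f x) (f y)" using hom unfolding lie_hom_def by auto
lemma fdiff: "x \<in> H \<Longrightarrow> y \<in> H \<Longrightarrow> f (x - y) = f x - f y"
  using fadd[of "x - y" y] L1.Vdiff by (simp add: eq_diff_eq)
lemma pre: "x \<in> V \<Longrightarrow> \<exists>x'\<in>H. f x' = x" using surj by auto

lemma key:
  assumes u: "u \<in> V" and v: "v \<in> V" and zdef: "z = br u v" and z0: "z \<noteq> 0"
    and mult: "\<And>p q. p \<in> V \<Longrightarrow> q \<in> V \<Longrightarrow> \<exists>t. br p q = s2 t z"
    and a: "a \<in> V" and b: "b \<in> V" and au: "br a u = 0" and av: "br a v = 0"
    and bu: "br b u = 0" and bv: "br b v = 0"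
  shows "br a b = 0"
proof (rule ccontr)
  assume ab: "br a b \<noteq> 0"
  obtain u' where u': "u' \<in> H" "f u' = u" using pre[OF u] by blast
  obtain v' where v': "v' \<in> H" "f v' = v" using pre[OF v] by blast
  obtain a' where a': "a' \<in> H" "f a' = a" using pre[OF a] by blast
  obtain b' where b': "b' \<in> H" "f b' = b" using pre[OF b] by blast
  obtain lam where lam: "br a b = s2 lam z" using mult a b by blast
  have lam0: "lam \<noteq> 0" using lam ab by auto
  define c where "c = brH u' v'"
  have cH: "c \<in> H" using c_def L1.cl u' v' by simp
  have fc: "f c = z" using c_def fbr u' v' zdef by simp
  have Z2: "\<And>p w k. p \<in> H \<Longrightarrow> f p = 0 \<Longrightarrow> w \<in> H \<Longrightarrow> k \<in> H \<Longrightarrow> brH (brH p w) k = 0"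
  proof -
    fix p w k assume p: "p \<in> H" "f p = 0" and w: "w \<in> H" and k: "k \<in> H"
    have "p \<in> lie_center2 H brH" using ker p by blast
    then show "brH (brH p w) k = 0" using w k unfolding lie_center2_def lie_center_def by auto
  qed
  have "c \<in> lie_center2 H brH"
    unfolding lie_center2_def lie_center_def
  proof (intro CollectI conjI ballI cH)
    fix w assume w: "w \<in> H"
    show "brH c w \<in> H" using L1.cl cH w by simp
    fix k assume k: "k \<in> H"
    define psi where "psi w = brH (brH c w) k" for w
    have F2: "brH (brH (brH p q) x) k = s1 mu (psi x)"
      if p: "p \<in> H" and q: "q \<in> H" and x: "x \<in> H" and e: "f (brH p q) = s2 mu z" for p q x mu
    proof -
      have pq: "brH p q \<in> H" using L1.cl p q by simp
      have sc: "s1 mu c \<in> H" using L1.Vsc cH by simp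
      have "f (brH p q - s1 mu c) = 0" using fdiff[OF pq sc] fsc[OF cH] fc e by simp
      then have "brH (brH (brH p q - s1 mu c) x) k = 0" using Z2 L1.Vdiff[OF pq sc] x k by blast
      moreover have "brH (brH (brH p q - s1 mu c) x) k = brH (brH (brH p q) x) k - s1 mu (psi x)"
        using L1.diffL L1.scL L1.cl pq sc cH x k psi_def L1.Vsc[OF L1.cl[OF cH x], of mu]
          L1.cl[OF pq x] L1.cl[OF cH x] by simp
      ultimately show ?thesis by simp
    qed
    have F0: "brH (brH (brH p q) x) k = 0"
      if p: "p \<in> H" and q: "q \<in> H" and x: "x \<in> H" and e: "f (brH p q) = 0" for p q x
      using Z2[OF L1.cl[OF p q] e x k] .
    have J: "brH (brH (brH p q) x) k + brH (brH (brH q x) p) k + brH (brH (brH x p) q) k = 0"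
      if p: "p \<in> H" and q: "q \<in> H" and x: "x \<in> H" for p q x
    proof -
      have "brH (brH (brH p q) x) k + brH (brH (brH q x) p) k + brH (brH (brH x p) q) k
          = brH (brH (brH p q) x + brH (brH q x) p + brH (brH x p) q) k"
        using L1.addL L1.cl L1.Vadd p q x k by simp
      also have "\<dots> = 0" using L1.jac2[OF p q x] L1.zeroL k by simp
      finally show ?thesis .
    qed
    have pu: "psi u' = 0"
    proof -
      have "brH (brH (brH a' b') u') k = s1 lam (psi u')" using F2 a' b' u' fbr lam by simp
      moreover have "brH (brH (brH b' u') a') k = 0" using F0 b' u' a' fbr bu by simp
      moreover have "brH (brH (brH u' a') b') k = 0" using F0 u' a' b' fbr L2.anti[OF u a] au by simp
      ultimately have "s1 lam (psi u') = 0" using J[OF a'(1) b'(1) u'(1)] by simp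
      then show ?thesis using lam0 by simp
    qed
    have pv: "psi v' = 0"
    proof -
      have "brH (brH (brH a' b') v') k = s1 lam (psi v')" using F2 a' b' v' fbr lam by simp
      moreover have "brH (brH (brH b' v') a') k = 0" using F0 b' v' a' fbr bv by simp
      moreover have "brH (brH (brH v' a') b') k = 0" using F0 v' a' b' fbr L2.anti[OF v a] av by simp
      ultimately have "s1 lam (psi v') = 0" using J[OF a'(1) b'(1) v'(1)] by simp
      then show ?thesis using lam0 by simp
    qed
    obtain m1 where m1: "br v (f w) = s2 m1 z" using mult v fin w by blast
    obtain m2 where m2: "br (f w) u = s2 m2 z" using mult v fin w u by blast
    have "brH (brH (brH v' w) u') k = s1 m1 (psi u')" using F2 v' w u' fbr m1 by simp
    moreover have "brH (brH (brH w u') v') k = s1 m2 (psi v')" using F2 w u' v' fbr m2 by simp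
    ultimately have "psi w = 0" using J[OF u'(1) v'(1) w] pu pv c_def psi_def by simp
    then show "brH (brH c w) k = 0" using psi_def by simp
  qed
  then have "f c = 0" using ker by blast
  then show False using fc z0 by simp
qed

end


context liealg begin

lemma heis_facts:
  assumes hs: "is_heisenberg scale V br m"
  obtains u v where "u \<in> V" "v \<in> V" "br u v \<noteq> 0"
    "\<And>p q. p \<in> V \<Longrightarrow> q \<in> V \<Longrightarrow> \<exists>t. br p q = scale t (br u v)"
    "\<And>p. p \<in> V \<Longrightarrow> (\<forall>x\<in>V. br p x = 0) \<Longrightarrow> p \<in> span {br u v}"
    "\<And>x. x \<in> V \<Longrightarrow> br (br u v) x = 0"
    "independent {u, v, br u v}" "card {u, v, br u v} = 3"
proof -
  define D where "D = lie_derived scale V br"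
  have D: "D = span {br x y |x y. x \<in> V \<and> y \<in> V}" unfolding D_def lie_derived_def by simp
  have dimV: "dim V = 2 * m + 1" and DC: "D = lie_center V br" and dimD: "dim D = 1"
    using hs unfolding is_heisenberg_def D_def by auto
  have "\<exists>x\<in>V. \<exists>y\<in>V. br x y \<noteq> 0"
  proof (rule ccontr)
    assume "\<not> ?thesis"
    then have "{br x y |x y. x \<in> V \<and> y \<in> V} \<subseteq> span {}" by (auto simp: span_empty)
    then have "dim {br x y |x y. x \<in> V \<and> y \<in> V} \<le> card ({}::'v set)" using dim_le_card by blast
    then show False using dimD D by simp
  qed
  then obtain u v where u: "u \<in> V" and v: "v \<in> V" and z0: "br u v \<noteq> 0" by blast
  define z where "z = br u v"
  have zD: "z \<in> D" using D u v z_def by (auto intro: span_base)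
  have Dz: "D \<subseteq> span {z}" using dim_one_span[OF zD] z0 z_def dimD by simp
  have mult: "\<exists>t. br p q = scale t z" if "p \<in> V" "q \<in> V" for p q
  proof -
    have "br p q \<in> D" using D that by (auto intro: span_base)
    then show ?thesis using Dz span_singleton by auto
  qed
  have cen: "p \<in> span {z}" if "p \<in> V" "\<forall>x\<in>V. br p x = 0" for p
    using that DC Dz unfolding lie_center_def by auto
  have zc: "br z x = 0" if "x \<in> V" for x using zD DC that unfolding lie_center_def by auto
  have zV: "z \<in> V" using z_def cl u v by simp
  have vnot: "v \<notin> span {z}"
  proof
    assume "v \<in> span {z}"
    then obtain t where "v = scale t z" using span_singleton by auto
    then have "br u v = scale t (br u z)" using scR u zV by simp
    also have "br u z = 0" using anti[OF u zV] zc u by simp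
    finally show False using z0 by simp
  qed
  have unot: "u \<notin> span {v, z}"
  proof
    assume "u \<in> span {v, z}"
    then obtain k where "u - scale k v \<in> span {z}" using span_breakdown_eq by blast
    then obtain t where t: "u - scale k v = scale t z" using span_singleton by auto
    have "br (u - scale k v) v = br u v - scale k (br v v)" using diffL scL u v Vsc by simp
    also have "\<dots> = z" using alt v z_def by simp
    finally have "z = br (scale t z) v" using t by simp
    also have "\<dots> = 0" using scL zV v zc by simp
    finally show False using z0 z_def by simp
  qed
  have zn: "z \<noteq> 0" using z0 z_def by simp
  have ind: "independent {u, v, z}"
    using unot vnot zn by (auto simp: independent_insert span_empty intro: span_base)
  have "u \<noteq> v" "u \<noteq> z" "v \<noteq> z" using unot vnot by (auto intro: span_base)
  then have "card {u, v, z} = 3" by simp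
  then show ?thesis using that[OF u v z0] mult cen zc ind z_def by blast
qed

end


definition HH :: "('h + nat \<Rightarrow> 'k::field) set" where
  "HH = {g. (\<forall>x. g (Inl x) = 0) \<and> (\<forall>n\<ge>5. g (Inr n) = 0)}"

definition bH :: "('h + nat \<Rightarrow> 'k::field) \<Rightarrow> ('h + nat \<Rightarrow> 'k) \<Rightarrow> ('h + nat \<Rightarrow> 'k)" where
  "bH a b = (\<lambda>i. if i = Inr 2 then a (Inr 0) * b (Inr 1) - a (Inr 1) * b (Inr 0)
     else if i = Inr 3 then a (Inr 0) * b (Inr 2) - a (Inr 2) * b (Inr 0)
     else if i = Inr 4 then a (Inr 0) * b (Inr 3) - a (Inr 3) * b (Inr 0) else 0)"

lemma vs_fscale: "vector_space (fscale :: 'k::field \<Rightarrow> ('i \<Rightarrow> 'k) \<Rightarrow> _)"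
  unfolding vector_space_def fscale_def by (auto simp: fun_eq_iff algebra_simps)

lemma lie_HH: "lie_algebra fscale (HH :: ('h + nat \<Rightarrow> 'k::field) set) bH"
  unfolding lie_algebra_def
proof (intro conjI ballI allI)
  show "vector_space (fscale :: 'k::field \<Rightarrow> ('h + nat \<Rightarrow> 'k) \<Rightarrow> _)" by (rule vs_fscale)
  show "module.subspace fscale (HH :: ('h + nat \<Rightarrow> 'k::field) set)"
    unfolding module.subspace_def[OF vs_fscale[unfolded module_iff_vector_space[symmetric]]]
    by (auto simp: HH_def fscale_def)
  fix x y :: "'h + nat \<Rightarrow> 'k" assume x: "x \<in> HH" and y: "y \<in> HH"
  show "bH x y \<in> HH" by (auto simp: HH_def bH_def)
  show "bH x x = 0" by (auto simp: bH_def fun_eq_iff algebra_simps)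
  fix c :: 'k
  show "bH (fscale c x) y = fscale c (bH x y)" "bH x (fscale c y) = fscale c (bH x y)"
    by (auto simp: bH_def fscale_def fun_eq_iff algebra_simps)
next
  fix x y z :: "'h + nat \<Rightarrow> 'k" assume x: "x \<in> HH" and y: "y \<in> HH" and z: "z \<in> HH"
  show "bH (x + y) z = bH x z + bH y z" "bH x (y + z) = bH x y + bH x z"
    by (auto simp: bH_def fun_eq_iff algebra_simps)
  show "bH x (bH y z) + bH y (bH z x) + bH z (bH x y) = 0"
    by (auto simp: bH_def fun_eq_iff algebra_simps)
qed


definition ee :: "nat \<Rightarrow> ('h + nat \<Rightarrow> 'k::field)" where
  "ee j = (\<lambda>i. if i = Inr j then 1 else 0)"

lemma ee_HH: "j < 5 \<Longrightarrow> ee j \<in> HH" by (auto simp: ee_def HH_def)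

lemma center2_HH: "lie_center2 (HH :: ('h + nat \<Rightarrow> 'k::field) set) bH =
   {x \<in> HH. x (Inr 0) = 0 \<and> x (Inr 1) = 0 \<and> x (Inr 2) = 0}"
proof (intro set_eqI iffI)
  fix x :: "'h + nat \<Rightarrow> 'k" assume x: "x \<in> lie_center2 HH bH"
  then have xH: "x \<in> HH" and c: "\<And>y w. y \<in> HH \<Longrightarrow> w \<in> HH \<Longrightarrow> bH (bH x y) w = 0"
    unfolding lie_center2_def lie_center_def by auto
  have e0: "ee 0 \<in> HH" and e1: "ee 1 \<in> HH" using ee_HH[of 0] ee_HH[of 1] by auto
  have A: "bH (bH x (ee 0)) (ee 0) (Inr 3) = 0" "bH (bH x (ee 0)) (ee 0) (Inr 4) = 0"
    "bH (bH x (ee 1)) (ee 0) (Inr 3) = 0" using c[OF e0 e0] c[OF e1 e0] by auto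
  then show "x \<in> {x \<in> HH. x (Inr 0) = 0 \<and> x (Inr 1) = 0 \<and> x (Inr 2) = 0}"
    using xH by (simp add: bH_def ee_def)
next
  fix x :: "'h + nat \<Rightarrow> 'k" assume "x \<in> {x \<in> HH. x (Inr 0) = 0 \<and> x (Inr 1) = 0 \<and> x (Inr 2) = 0}"
  then have xH: "x \<in> HH" and z: "x (Inr 0) = 0" "x (Inr 1) = 0" "x (Inr 2) = 0" by auto
  have "bH x y \<in> HH" for y using lie_HH xH unfolding lie_algebra_def HH_def bH_def by auto
  moreover have "bH (bH x y) w = 0" for y w using z by (auto simp: bH_def fun_eq_iff)
  ultimately show "x \<in> lie_center2 HH bH" using xH unfolding lie_center2_def lie_center_def by auto
qed

context liealg begin

lemma br_formula:
  assumes u: "u \<in> V" and v: "v \<in> V" and zd: "z = br u v" and zc: "\<And>x. x \<in> V \<Longrightarrow> br z x = 0"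
  shows "br (scale A u + scale B v + scale C z) (scale A' u + scale B' v + scale C' z) = scale (A * B' - B * A') z"
proof -
  have z: "z \<in> V" using zd cl u v by simp
  define y where "y = scale A' u + scale B' v + scale C' z"
  have yV: "y \<in> V" using y_def Vadd Vsc u v z by simp
  have uz: "br u z = 0" using anti[OF u z] zc u by simp
  have vz: "br v z = 0" using anti[OF v z] zc v by simp
  have vu: "br v u = - z" using anti[OF v u] zd by simp
  have bu: "br u y = scale B' z" using y_def addR scR Vadd Vsc u v z alt uz zd by simp
  have bv: "br v y = - scale A' z" using y_def addR scR Vadd Vsc u v z alt vz vu by simp
  have bz: "br z y = 0" using zc yV by simp
  have "br (scale A u + scale B v + scale C z) y = scale A (br u y) + scale B (br v y) + scale C (br z y)"
    using addL scL Vadd Vsc u v z yV by simp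
  also have "\<dots> = scale (A * B' - B * A') z" using bu bv bz by (simp add: algebra_simps)
  finally show ?thesis using y_def by simp
qed

lemma construct:
  assumes u: "u \<in> V" and v: "v \<in> V" and zd: "z = br u v" and z0: "z \<noteq> 0"
    and zc: "\<And>x. x \<in> V \<Longrightarrow> br z x = 0" and sp: "V \<subseteq> span {u, v, z}"
  shows "two_capable TYPE('h) scale V br"
proof -
  have z: "z \<in> V" using zd cl u v by simp
  define ff :: "('h + nat \<Rightarrow> 'k) \<Rightarrow> 'v" where
    "ff g = scale (g (Inr 0)) u + scale (g (Inr 1)) v + scale (g (Inr 2)) z" for g
  have ffV: "ff g \<in> V" for g using ff_def Vadd Vsc u v z by simp
  have brf: "br (ff a) (ff b) = scale (a (Inr 0) * b (Inr 1) - a (Inr 1) * b (Inr 0)) z" for a b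
    unfolding ff_def using br_formula[OF u v zd zc] by blast
  have hom: "lie_hom fscale HH bH scale V br ff"
    unfolding lie_hom_def
  proof (intro conjI ballI allI)
    fix x y :: "'h + nat \<Rightarrow> 'k"
    show "ff x \<in> V" by (rule ffV)
    show "ff (x + y) = ff x + ff y" by (simp add: ff_def algebra_simps)
    show "ff (bH x y) = br (ff x) (ff y)" using brf by (simp add: ff_def bH_def)
    fix c :: 'k
    show "ff (fscale c x) = scale c (ff x)" by (simp add: ff_def fscale_def algebra_simps)
  qed
  have ker0: "ff g = 0 \<longleftrightarrow> g (Inr 0) = 0 \<and> g (Inr 1) = 0 \<and> g (Inr 2) = 0" for g
  proof
    assume h: "ff g = 0"
    have "br (ff g) (ff (ee 1)) = 0" "br (ff g) (ff (ee 0)) = 0" using h zeroL ffV by auto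
    then have a: "g (Inr 0) = 0" "g (Inr 1) = 0" using brf z0 by (auto simp: ee_def)
    then have "scale (g (Inr 2)) z = 0" using h by (simp add: ff_def)
    then show "g (Inr 0) = 0 \<and> g (Inr 1) = 0 \<and> g (Inr 2) = 0" using a z0 by simp
  qed (simp add: ff_def)
  have img: "ff ` HH = V"
  proof
    show "ff ` HH \<subseteq> V" using ffV by auto
    show "V \<subseteq> ff ` HH"
    proof
      fix w assume "w \<in> V"
      then have "w \<in> span {u, v, z}" using sp by auto
      then obtain A where "w - scale A u \<in> span {v, z}" using span_breakdown_eq by blast
      then obtain B where "w - scale A u - scale B v \<in> span {z}" using span_breakdown_eq by blast
      then obtain C where "w - scale A u - scale B v = scale C z" using span_singleton by auto
      then have we: "w = scale A u + scale B v + scale C z" by (simp add: algebra_simps)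
      define g :: "'h + nat \<Rightarrow> 'k" where
        "g = (\<lambda>i. if i = Inr 0 then A else if i = Inr 1 then B else if i = Inr 2 then C else 0)"
      have "g \<in> HH" by (auto simp: g_def HH_def)
      moreover have "ff g = w" using we by (simp add: g_def ff_def)
      ultimately show "w \<in> ff ` HH" by blast
    qed
  qed
  have "{x \<in> HH. ff x = 0} = lie_center2 HH bH" using center2_HH ker0 by auto
  then show ?thesis unfolding two_capable_def using lie_HH hom img by blast
qed

end


theorem theorem3p3:
  fixes scale :: "'k::field \<Rightarrow> 'v::ab_group_add \<Rightarrow> 'v"
    and V :: "'v set" and br :: "'v \<Rightarrow> 'v \<Rightarrow> 'v" and m :: nat
  assumes "is_heisenberg scale V br m"
  shows "two_capable TYPE('h) scale V br \<longleftrightarrow> m = 1"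
proof -
  have hs: "is_heisenberg scale V br m" by fact
  interpret L: liealg scale V br using hs unfolding is_heisenberg_def by unfold_locales auto
  have dimV: "L.dim V = 2 * m + 1" using hs unfolding is_heisenberg_def by auto
  obtain u v where u: "u \<in> V" and v: "v \<in> V" and z0: "br u v \<noteq> 0"
    and mult: "\<And>p q. p \<in> V \<Longrightarrow> q \<in> V \<Longrightarrow> \<exists>t. br p q = scale t (br u v)"
    and cen: "\<And>p. p \<in> V \<Longrightarrow> (\<forall>x\<in>V. br p x = 0) \<Longrightarrow> p \<in> L.span {br u v}"
    and zc: "\<And>x. x \<in> V \<Longrightarrow> br (br u v) x = 0"
    and ind: "L.independent {u, v, br u v}" and c3: "card {u, v, br u v} = 3"
    using L.heis_facts[OF hs] by blast
  have zV: "br u v \<in> V" using L.cl u v by simp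
  have sub3: "{u, v, br u v} \<subseteq> V" using u v zV by auto
  have le: "3 \<le> L.dim V" using L.indep_card_le_dim[OF sub3 ind] dimV c3 by simp
  show ?thesis
  proof
    assume "two_capable TYPE('h) scale V br"
    then obtain H :: "('h + nat \<Rightarrow> 'k) set" and brH f where
      lH: "lie_algebra fscale H brH" and hom: "lie_hom fscale H brH scale V br f"
      and im: "f ` H = V" and ker: "{x \<in> H. f x = 0} = lie_center2 H brH"
      unfolding two_capable_def by blast
    interpret P: liepair fscale H brH scale V br f
      using lH hom im ker L.lie by unfold_locales auto
    have "V \<subseteq> L.span {u, v, br u v}"
      using L.abelian_W_span[OF u v refl cen mult zc] P.key[OF u v refl z0 mult] by blast
    then have "L.dim V \<le> card {u, v, br u v}" using L.dim_le_card by blast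
    then show "m = 1" using le dimV c3 by simp
  next
    assume "m = 1"
    then have "V \<subseteq> L.span {u, v, br u v}"
      using L.indep_spans[OF sub3 ind] dimV c3 by simp
    then show "two_capable TYPE('h) scale V br"
      using L.construct[OF u v refl z0 zc] by blast
  qed
qed

end
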